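(* Let $n \ge 2$, $k \ge 0$, and let $n_1, \dots, n_k$ be even integers with $1 \le n_i \le 2n-2$. Then $\mathcal{P}_n(n_1,\dots,n_k;-n_k,\dots,-n_1)$ is a regular presentation of $Q_{4n}$.
   Context: $Q_{4n}$ is identified with $\langle x, y \mid x^n y^{-2}, xyxy^{-1} \rangle$. A presentation $\langle x, y \mid x^n y^{-2}, R\rangle$ is regular if $x \mapsto x$, $y \mapsto y$ induces a group isomorphism from the group it presents to $Q_{4n}$. For integers $k\ge0$, $n_1,\dots,n_k,m_1,\dots,m_k$, with $n_{k+1} = 1 - \sum_{i=1}^k n_i$, $m_{k+1} = 1 - \sum_{i=1}^k m_i$, $\mathcal{P}_n(n_1,\dots,n_k;m_1,\dots,m_k) = \langle x, y \mid x^n y^{-2},\ x^{n_1} y x^{m_1} y^{-1} \cdots x^{n_{k+1}} y x^{m_{k+1}} y^{-1} \rangle$; thus here $m_i = -n_{k+1-i}$ for $1 \le i \le k$. *)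

theory Defs
  imports "HOL-Algebra.Group"
begin

text \<open>Group presentations on the two generators x, y, built from words in the
free monoid on the letters x, x^-1, y, y^-1.  A letter is (inverted?, generator).\<close>

datatype gen = GX | GY

type_synonym word = "(bool \<times> gen) list"

definition inv_letter :: "bool \<times> gen \<Rightarrow> bool \<times> gen" where
  "inv_letter l = (\<not> fst l, snd l)"

text \<open>The congruence on words generated by free cancellation and the relators R;
its classes are the elements of the group presented by the generators and R.\<close>
inductive word_eq :: "word set \<Rightarrow> word \<Rightarrow> word \<Rightarrow> bool" for R :: "word set" where
  refl: "word_eq R w w"
| sym: "word_eq R u v \<Longrightarrow> word_eq R v u"
| trans: "word_eq R u v \<Longrightarrow> word_eq R v w \<Longrightarrow> word_eq R u w"
| cancel: "word_eq R (u @ [l, inv_letter l] @ v) (u @ v)"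
| rel: "r \<in> R \<Longrightarrow> word_eq R (u @ r @ v) (u @ v)"

definition pclass :: "word set \<Rightarrow> word \<Rightarrow> word set" where
  "pclass R w = {v. word_eq R w v}"

definition presented_group :: "word set \<Rightarrow> word set monoid" where
  "presented_group R =
     \<lparr> carrier = range (pclass R),
       mult = (\<lambda>A B. {v. \<exists>a\<in>A. \<exists>b\<in>B. word_eq R (a @ b) v}),
       one = pclass R [] \<rparr>"

definition gx :: word where "gx = [(False, GX)]"
definition gy :: word where "gy = [(False, GY)]"
definition gy_inv :: word where "gy_inv = [(True, GY)]"

definition gpow :: "gen \<Rightarrow> int \<Rightarrow> word" where
  "gpow g k = (if 0 \<le> k then replicate (nat k) (False, g) else replicate (nat (- k)) (True, g))"

definition rel0 :: "nat \<Rightarrow> word" where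
  "rel0 n = gpow GX (int n) @ gpow GY (-2)"

definition Q :: "nat \<Rightarrow> word set monoid" where
  "Q n = presented_group {rel0 n, gx @ gy @ gx @ gy_inv}"

text \<open>The second relator of P_n(n_1..n_k; m_1..m_k):
  x^{n_1} y x^{m_1} y^-1 ... x^{n_{k+1}} y x^{m_{k+1}} y^-1,
  with n_{k+1} = 1 - sum n_i, m_{k+1} = 1 - sum m_i.\<close>
definition P_rel :: "int list \<Rightarrow> int list \<Rightarrow> word" where
  "P_rel ns ms =
     (let ns' = ns @ [1 - sum_list ns]; ms' = ms @ [1 - sum_list ms]
      in concat (map2 (\<lambda>a b. gpow GX a @ gy @ gpow GX b @ gy_inv) ns' ms'))"

definition P :: "nat \<Rightarrow> int list \<Rightarrow> int list \<Rightarrow> word set monoid" where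
  "P n ns ms = presented_group {rel0 n, P_rel ns ms}"

definition regular :: "nat \<Rightarrow> word \<Rightarrow> bool" where
  "regular n r \<longleftrightarrow>
     (\<exists>h. h \<in> iso (presented_group {rel0 n, r}) (Q n)
          \<and> h (pclass {rel0 n, r} gx) = pclass {rel0 n, gx @ gy @ gx @ gy_inv} gx
          \<and> h (pclass {rel0 n, r} gy) = pclass {rel0 n, gx @ gy @ gx @ gy_inv} gy)"

end

theory Submission
  imports Defs
begin


lemma word_eq_ctx: "word_eq R u v \<Longrightarrow> word_eq R (a @ u @ b) (a @ v @ b)"
proof (induction rule: word_eq.induct)
  case (refl w) show ?case by (rule word_eq.refl)
next
  case (sym u v) then show ?case by (blast intro: word_eq.sym)
next
  case (trans u v w) then show ?case by (blast intro: word_eq.trans)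
next
  case (cancel u l v)
  have "word_eq R ((a@u) @ [l, inv_letter l] @ (v@b)) ((a@u) @ (v@b))" by (rule word_eq.cancel)
  then show ?case by simp
next
  case (rel r u v)
  have "word_eq R ((a@u) @ r @ (v@b)) ((a@u) @ (v@b))" using rel by (rule word_eq.rel)
  then show ?case by simp
qed

lemma word_eq_app: "word_eq R u u' \<Longrightarrow> word_eq R v v' \<Longrightarrow> word_eq R (u @ v) (u' @ v')"
proof -
  assume a: "word_eq R u u'" and b: "word_eq R v v'"
  have "word_eq R ([] @ u @ v) ([] @ u' @ v)" using a by (rule word_eq_ctx)
  moreover have "word_eq R (u' @ v @ []) (u' @ v' @ [])" using b by (rule word_eq_ctx)
  ultimately show ?thesis by (auto intro: word_eq.trans)
qed

definition winv :: "word \<Rightarrow> word" where "winv w = rev (map inv_letter w)"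

lemma inv_letter_inv[simp]: "inv_letter (inv_letter l) = l"
  by (simp add: inv_letter_def)

lemma winv_winv[simp]: "winv (winv w) = w"
  by (simp add: winv_def rev_map comp_def)

lemma winv_r: "word_eq R (w @ winv w) []"
proof (induction w)
  case Nil then show ?case by (simp add: winv_def word_eq.refl)
next
  case (Cons l w)
  have e: "(l # w) @ winv (l # w) = [l] @ (w @ winv w) @ [inv_letter l]" by (simp add: winv_def)
  have "word_eq R ([l] @ (w @ winv w) @ [inv_letter l]) ([l] @ [] @ [inv_letter l])"
    using Cons by (rule word_eq_ctx)
  moreover have "word_eq R ([] @ [l, inv_letter l] @ []) ([] @ [])" by (rule word_eq.cancel)
  ultimately show ?case unfolding e by (auto intro: word_eq.trans)
qed

lemma winv_l: "word_eq R (winv w @ w) []"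
  using winv_r[of R "winv w"] by simp

lemma pclass_eq: "pclass R u = pclass R v \<longleftrightarrow> word_eq R u v"
proof
  assume "pclass R u = pclass R v"
  then have "v \<in> pclass R u" by (simp add: pclass_def word_eq.refl)
  then show "word_eq R u v" by (simp add: pclass_def)
next
  assume h: "word_eq R u v"
  show "pclass R u = pclass R v"
    unfolding pclass_def using h by (auto intro: word_eq.trans word_eq.sym)
qed

lemma pg_mult: "pclass R u \<otimes>\<^bsub>presented_group R\<^esub> pclass R v = pclass R (u @ v)"
  unfolding presented_group_def pclass_def
  by (auto intro: word_eq.trans word_eq_app word_eq.refl)

lemma pg_one: "\<one>\<^bsub>presented_group R\<^esub> = pclass R []"
  by (simp add: presented_group_def)

lemma pg_carrier[simp]: "pclass R u \<in> carrier (presented_group R)"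
  by (simp add: presented_group_def)

lemma pg_group: "group (presented_group R)"
proof (rule groupI)
  fix x y assume "x \<in> carrier (presented_group R)" "y \<in> carrier (presented_group R)"
  then obtain a b where "x = pclass R a" "y = pclass R b"
    by (auto simp: presented_group_def)
  then show "x \<otimes>\<^bsub>presented_group R\<^esub> y \<in> carrier (presented_group R)"
    by (simp add: pg_mult)
next
  show "\<one>\<^bsub>presented_group R\<^esub> \<in> carrier (presented_group R)" by (simp add: pg_one)
next
  fix x y z assume "x \<in> carrier (presented_group R)" "y \<in> carrier (presented_group R)"
    "z \<in> carrier (presented_group R)"
  then obtain a b c where "x = pclass R a" "y = pclass R b" "z = pclass R c"
    by (auto simp: presented_group_def)
  then show "x \<otimes>\<^bsub>presented_group R\<^esub> y \<otimes>\<^bsub>presented_group R\<^esub> z =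
    x \<otimes>\<^bsub>presented_group R\<^esub> (y \<otimes>\<^bsub>presented_group R\<^esub> z)"
    by (simp add: pg_mult)
next
  fix x assume "x \<in> carrier (presented_group R)"
  then obtain a where "x = pclass R a" by (auto simp: presented_group_def)
  then show "\<one>\<^bsub>presented_group R\<^esub> \<otimes>\<^bsub>presented_group R\<^esub> x = x"
    by (simp add: pg_mult pg_one)
next
  fix x assume "x \<in> carrier (presented_group R)"
  then obtain a where "x = pclass R a" by (auto simp: presented_group_def)
  then show "\<exists>y\<in>carrier (presented_group R). y \<otimes>\<^bsub>presented_group R\<^esub> x = \<one>\<^bsub>presented_group R\<^esub>"
    by (intro bexI[of _ "pclass R (winv a)"]) (simp_all add: pg_mult pg_one pclass_eq winv_l)
qed



definition gprod :: "('a, 'b) monoid_scheme \<Rightarrow> 'a list \<Rightarrow> 'a" where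
  "gprod G xs = foldr (\<lambda>a b. a \<otimes>\<^bsub>G\<^esub> b) xs \<one>\<^bsub>G\<^esub>"

context group
begin

lemma gprod_Nil[simp]: "gprod G [] = \<one>" by (simp add: gprod_def)
lemma gprod_Cons[simp]: "gprod G (a # xs) = a \<otimes> gprod G xs" by (simp add: gprod_def)

lemma gprod_closed[simp]: "set xs \<subseteq> carrier G \<Longrightarrow> gprod G xs \<in> carrier G"
  by (induction xs) auto

lemma gprod_append: "set xs \<subseteq> carrier G \<Longrightarrow> set ys \<subseteq> carrier G \<Longrightarrow>
    gprod G (xs @ ys) = gprod G xs \<otimes> gprod G ys"
  by (induction xs) (auto simp: m_assoc)

lemma inv_cancel_left': "g \<in> carrier G \<Longrightarrow> z \<in> carrier G \<Longrightarrow> inv g \<otimes> (g \<otimes> z) = z"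
  by (simp add: m_assoc[symmetric])

lemma gprod_conj: "set xs \<subseteq> carrier G \<Longrightarrow> g \<in> carrier G \<Longrightarrow>
    g \<otimes> gprod G xs \<otimes> inv g = gprod G (map (\<lambda>z. g \<otimes> z \<otimes> inv g) xs)"
proof (induction xs)
  case Nil then show ?case by simp
next
  case (Cons a xs)
  have a: "a \<in> carrier G" and xs: "set xs \<subseteq> carrier G" using Cons.prems by auto
  have P: "gprod G xs \<in> carrier G" using xs by simp
  have "g \<otimes> gprod G (a # xs) \<otimes> inv g = (g \<otimes> a \<otimes> inv g) \<otimes> (g \<otimes> gprod G xs \<otimes> inv g)"
    using a P Cons.prems(2) by (simp add: m_assoc inv_cancel_left')
  with Cons.IH[OF xs Cons.prems(2)] show ?case by simp
qed

lemma gprod_inv: "set xs \<subseteq> carrier G \<Longrightarrow> inv (gprod G xs) = gprod G (rev (map (\<lambda>z. inv z) xs))"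
proof (induction xs)
  case Nil then show ?case by simp
next
  case (Cons a xs)
  have a: "a \<in> carrier G" and xs: "set xs \<subseteq> carrier G" using Cons.prems by auto
  have s: "set (rev (map (\<lambda>z. inv z) xs)) \<subseteq> carrier G" using xs by auto
  have "inv (gprod G (a # xs)) = inv (gprod G xs) \<otimes> inv a"
    using a xs by (simp add: inv_mult_group)
  also have "\<dots> = gprod G (rev (map (\<lambda>z. inv z) xs)) \<otimes> inv a" using Cons.IH[OF xs] by simp
  also have "\<dots> = gprod G (rev (map (\<lambda>z. inv z) (a # xs)))"
    using s a by (simp add: gprod_append)
  finally show ?case .
qed

lemma conj_nat_pow: "g \<in> carrier G \<Longrightarrow> x \<in> carrier G \<Longrightarrow>
    g \<otimes> x [^] (m::nat) \<otimes> inv g = (g \<otimes> x \<otimes> inv g) [^] m"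
proof (induction m)
  case 0 then show ?case by simp
next
  case (Suc m)
  have g: "g \<in> carrier G" and x: "x \<in> carrier G" by fact+
  have "g \<otimes> x [^] Suc m \<otimes> inv g = (g \<otimes> x [^] m \<otimes> inv g) \<otimes> (g \<otimes> x \<otimes> inv g)"
    using g x by (simp add: m_assoc inv_cancel_left' nat_pow_Suc)
  also have "\<dots> = (g \<otimes> x \<otimes> inv g) [^] m \<otimes> (g \<otimes> x \<otimes> inv g)"
    by (simp only: Suc.IH[OF g x])
  also have "\<dots> = (g \<otimes> x \<otimes> inv g) [^] Suc m"
    by (simp only: nat_pow_Suc)
  finally show ?case .
qed

lemma conj_pow: "g \<in> carrier G \<Longrightarrow> x \<in> carrier G \<Longrightarrow>
    g \<otimes> x [^] (b::int) \<otimes> inv g = (g \<otimes> x \<otimes> inv g) [^] b"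
proof (cases "b < 0")
  case True
  assume g: "g \<in> carrier G" and x: "x \<in> carrier G"
  have "g \<otimes> x [^] b \<otimes> inv g = g \<otimes> inv (x [^] nat (-b)) \<otimes> inv g"
    using True by (simp only: int_pow_def2 if_True)
  also have "\<dots> = inv (g \<otimes> x [^] nat (-b) \<otimes> inv g)"
    using g x by (simp add: inv_mult_group m_assoc)
  also have "\<dots> = inv ((g \<otimes> x \<otimes> inv g) [^] nat (-b))"
    by (simp only: conj_nat_pow[OF g x])
  also have "\<dots> = (g \<otimes> x \<otimes> inv g) [^] b"
    using True by (simp only: int_pow_def2 if_True)
  finally show ?thesis .
next
  case False
  assume g: "g \<in> carrier G" and x: "x \<in> carrier G"
  have "g \<otimes> x [^] b \<otimes> inv g = g \<otimes> x [^] nat b \<otimes> inv g"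
    using False by (simp only: int_pow_def2 if_False)
  also have "\<dots> = (g \<otimes> x \<otimes> inv g) [^] nat b"
    by (simp only: conj_nat_pow[OF g x])
  also have "\<dots> = (g \<otimes> x \<otimes> inv g) [^] b"
    using False by (simp only: int_pow_def2 if_False)
  finally show ?thesis .
qed

lemma solve_mid: "a \<in> carrier G \<Longrightarrow> b \<in> carrier G \<Longrightarrow> c \<in> carrier G \<Longrightarrow>
   a \<otimes> b \<otimes> c = \<one> \<Longrightarrow> b = inv a \<otimes> inv c"
proof -
  assume a: "a \<in> carrier G" and b: "b \<in> carrier G" and c: "c \<in> carrier G"
    and e: "a \<otimes> b \<otimes> c = \<one>"
  have "inv c = a \<otimes> b" by (rule inv_equality) (use a b c e in auto)
  then show ?thesis using a b c by (simp add: inv_solve_left)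
qed

lemma pows_prod:
  assumes x: "x \<in> carrier G" and len: "length (L::int list) = length (M::int list)"
  shows "gprod G (map (\<lambda>(a,b). x [^] (a - b)) (zip L M)) = x [^] (sum_list L - sum_list M)"
  using len
proof (induction L M rule: list_induct2)
  case Nil then show ?case by simp
next
  case (Cons a L b M)
  have e: "sum_list (a # L) - sum_list (b # M) = (a - b) + (sum_list L - sum_list M)" by simp
  have "gprod G (map (\<lambda>(a,b). x [^] (a - b)) (zip (a # L) (b # M)))
      = x [^] (a - b) \<otimes> gprod G (map (\<lambda>(a,b). x [^] (a - b)) (zip L M))" by simp
  also have "\<dots> = x [^] (a - b) \<otimes> x [^] (sum_list L - sum_list M)" by (simp only: Cons.IH)
  also have "\<dots> = x [^] (sum_list (a # L) - sum_list (b # M))" by (simp only: e int_pow_mult[OF x])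
  finally show ?case .
qed

end



lemma sum_list_neg_rev: "sum_list (map uminus (rev L)) = - sum_list (L::int list)"
  by (induction L) auto

lemma rev_zip_sym: "rev (map (\<lambda>(a,b). f b a) (zip L (rev L))) = map (\<lambda>(a,b). f a b) (zip L (rev L))"
proof -
  have "rev (zip L (rev L)) = zip (rev L) L"
    using zip_rev[of L "rev L"] by simp
  then have "rev (map (\<lambda>(a,b). f b a) (zip L (rev L))) = map (\<lambda>(a,b). f b a) (zip (rev L) L)"
    by (simp add: rev_map)
  also have "\<dots> = map (\<lambda>(a,b). f a b) (zip L (rev L))"
    by (subst zip_commute) (simp add: comp_def case_prod_beta)
  finally show ?thesis .
qed

context group
begin

definition relG :: "'a \<Rightarrow> 'a \<Rightarrow> int list \<Rightarrow> int list \<Rightarrow> 'a" where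
  "relG x y L M = gprod G (map2 (\<lambda>a b. x [^] a \<otimes> y \<otimes> x [^] b \<otimes> inv y)
      (L @ [1 - sum_list L]) (M @ [1 - sum_list M]))"

lemma dir1:
  assumes x: "x \<in> carrier G" and y: "y \<in> carrier G"
    and q: "x \<otimes> y \<otimes> x \<otimes> inv y = \<one>" and len: "length L = length M"
  shows "relG x y L M = \<one>"
proof -
  have h1: "x \<otimes> (y \<otimes> x \<otimes> inv y) = \<one>" using q x y by (simp add: m_assoc)
  have h2: "(y \<otimes> x \<otimes> inv y) \<otimes> x = \<one>" by (rule inv_comm[OF h1]) (use x y in auto)
  have "inv x = y \<otimes> x \<otimes> inv y" by (rule inv_equality[OF h2]) (use x y in auto)
  then have w: "y \<otimes> x \<otimes> inv y = inv x" by simp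
  have B: "x [^] a \<otimes> y \<otimes> x [^] b \<otimes> inv y = x [^] (a - b)" for a b :: int
  proof -
    have "x [^] a \<otimes> y \<otimes> x [^] b \<otimes> inv y = x [^] a \<otimes> (y \<otimes> x [^] b \<otimes> inv y)"
      using x y by (simp add: m_assoc)
    also have "\<dots> = x [^] a \<otimes> (inv x) [^] b" using x y by (simp add: conj_pow w)
    also have "\<dots> = x [^] (a - b)" using x by (simp add: int_pow_inv int_pow_diff)
    finally show ?thesis .
  qed
  have "relG x y L M = gprod G (map (\<lambda>(a,b). x [^] (a - b))
      (zip (L @ [1 - sum_list L]) (M @ [1 - sum_list M])))"
    unfolding relG_def by (simp only: B)
  also have "\<dots> = x [^] (sum_list (L @ [1 - sum_list L]) - sum_list (M @ [1 - sum_list M]))"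
    using x len by (intro pows_prod) auto
  also have "\<dots> = \<one>" by simp
  finally show ?thesis .
qed

end



lemma even_sum_list: "\<forall>a\<in>set L. even (a::int) \<Longrightarrow> even (sum_list L)"
  by (induction L) auto

context group
begin

lemma conj_mult: "g \<in> carrier G \<Longrightarrow> a \<in> carrier G \<Longrightarrow> b \<in> carrier G \<Longrightarrow>
   g \<otimes> (a \<otimes> b) \<otimes> inv g = (g \<otimes> a \<otimes> inv g) \<otimes> (g \<otimes> b \<otimes> inv g)"
  by (simp add: m_assoc inv_cancel_left')

lemma gprod_snoc: "set xs \<subseteq> carrier G \<Longrightarrow> c \<in> carrier G \<Longrightarrow>
   gprod G (xs @ [c]) = gprod G xs \<otimes> c"
  by (simp add: gprod_append)

lemma dir2:
  assumes x: "x \<in> carrier G" and y: "y \<in> carrier G"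
    and xn: "x [^] (n::nat) = y [^] (2::nat)"
    and rel: "relG x y L (map uminus (rev L)) = \<one>"
    and ev: "\<forall>a\<in>set L. even a"
  shows "x \<otimes> y \<otimes> x \<otimes> inv y = \<one>"
proof -
  define w where "w = y \<otimes> x \<otimes> inv y"
  define S where "S = sum_list L"
  define M where "M = map uminus (rev L)"
  define Z where "Z = zip L (rev L)"
  have w_c: "w \<in> carrier G" using x y by (simp add: w_def)
  have lenM: "length L = length M" by (simp add: M_def)
  have sumM: "sum_list M = - S" by (simp add: M_def S_def sum_list_neg_rev)
  have evS: "even S" using ev by (simp add: S_def even_sum_list)
  have evM: "even b" if "b \<in> set M" for b using that ev by (auto simp: M_def)
  have yy: "y \<otimes> y = x [^] n" using xn y by (simp add: numeral_2_eq_2)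
  have comm: "x [^] n \<otimes> x = x \<otimes> x [^] n"
    using x by (simp add: nat_pow_Suc2[symmetric])
  have yw: "y \<otimes> w \<otimes> inv y = x"
  proof -
    have "y \<otimes> w \<otimes> inv y = (y \<otimes> y) \<otimes> x \<otimes> inv (y \<otimes> y)"
      using x y by (simp add: w_def m_assoc inv_mult_group)
    also have "\<dots> = x \<otimes> x [^] n \<otimes> inv (x [^] n)" by (simp only: yy comm)
    also have "\<dots> = x" using x by (simp add: m_assoc)
    finally show ?thesis .
  qed
  have cx: "y \<otimes> x [^] (a::int) \<otimes> inv y = w [^] a" for a
    using conj_pow[OF y x] by (simp add: w_def)
  have cw: "y \<otimes> w [^] (a::int) \<otimes> inv y = x [^] a" for a
    using conj_pow[OF y w_c] by (simp add: yw)
  have Bx: "x [^] a \<otimes> y \<otimes> x [^] b \<otimes> inv y = x [^] a \<otimes> w [^] b" for a b :: int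
  proof -
    have "x [^] a \<otimes> y \<otimes> x [^] b \<otimes> inv y = x [^] a \<otimes> (y \<otimes> x [^] b \<otimes> inv y)"
      using x y by (simp add: m_assoc)
    then show ?thesis by (simp only: cx)
  qed
  define P where "P = gprod G (map2 (\<lambda>a b. x [^] a \<otimes> w [^] b) L M)"
  define Q where "Q = x [^] (1 - S) \<otimes> w [^] (1 + S)"
  define P' where "P' = gprod G (map2 (\<lambda>a b. w [^] a \<otimes> x [^] b) L M)"
  define Q' where "Q' = w [^] (1 - S) \<otimes> x [^] (1 + S)"
  have setP: "set (map2 (\<lambda>a b. x [^] a \<otimes> w [^] b) L M) \<subseteq> carrier G" using x w_c by auto
  have setP': "set (map2 (\<lambda>a b. w [^] a \<otimes> x [^] b) L M) \<subseteq> carrier G" using x w_c by auto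
  have P_c: "P \<in> carrier G" using setP by (simp add: P_def)
  have P'_c: "P' \<in> carrier G" using setP' by (simp add: P'_def)
  have Q_c: "Q \<in> carrier G" using x w_c by (simp add: Q_def)
  have Q'_c: "Q' \<in> carrier G" using x w_c by (simp add: Q'_def)
  have PQ: "P \<otimes> Q = \<one>"
  proof -
    have "relG x y L M = gprod G (map2 (\<lambda>a b. x [^] a \<otimes> w [^] b) (L @ [1 - S]) (M @ [1 + S]))"
      unfolding relG_def by (simp only: Bx sumM S_def[symmetric] diff_minus_eq_add)
    also have "\<dots> = gprod G (map2 (\<lambda>a b. x [^] a \<otimes> w [^] b) L M @ [Q])"
      using lenM by (simp add: Q_def)
    also have "\<dots> = P \<otimes> Q" using setP Q_c by (simp add: gprod_snoc P_def)
    finally show ?thesis using rel by (simp add: M_def)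
  qed
  have conjP: "y \<otimes> P \<otimes> inv y = P'"
  proof -
    have "y \<otimes> P \<otimes> inv y = gprod G (map (\<lambda>z. y \<otimes> z \<otimes> inv y) (map2 (\<lambda>a b. x [^] a \<otimes> w [^] b) L M))"
      unfolding P_def using setP y by (rule gprod_conj)
    also have "map (\<lambda>z. y \<otimes> z \<otimes> inv y) (map2 (\<lambda>a b. x [^] a \<otimes> w [^] b) L M)
        = map2 (\<lambda>a b. w [^] a \<otimes> x [^] b) L M"
      unfolding map_map by (rule map_cong) (auto simp: conj_mult[OF y] x w_c cx cw)
    finally show ?thesis by (simp add: P'_def)
  qed
  have conjQ: "y \<otimes> Q \<otimes> inv y = Q'"
    unfolding Q_def Q'_def using x w_c by (simp add: conj_mult[OF y] cx cw)
  have P'Q': "P' \<otimes> Q' = \<one>"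
  proof -
    have "y \<otimes> (P \<otimes> Q) \<otimes> inv y = \<one>" using PQ y by simp
    then show ?thesis using P_c Q_c by (simp add: conj_mult[OF y] conjP conjQ)
  qed
  have map2M: "map2 h L M = map (\<lambda>(a,b). h a (-b)) Z" for h :: "int \<Rightarrow> int \<Rightarrow> 'a"
    by (simp add: M_def Z_def zip_map2 comp_def case_prod_beta)
  have invP': "inv P' = P"
  proof -
    have "inv P' = gprod G (rev (map (\<lambda>z. inv z) (map2 (\<lambda>a b. w [^] a \<otimes> x [^] b) L M)))"
      unfolding P'_def using setP' by (rule gprod_inv)
    also have "map (\<lambda>z. inv z) (map2 (\<lambda>a b. w [^] a \<otimes> x [^] b) L M)
        = map (\<lambda>(a,b). (\<lambda>a b. x [^] a \<otimes> w [^] (-b)) b a) Z"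
      unfolding map2M map_map
      by (rule map_cong) (auto simp: inv_mult_group x w_c int_pow_neg)
    also have "rev \<dots> = map (\<lambda>(a,b). x [^] a \<otimes> w [^] (-b)) Z"
      unfolding Z_def by (rule rev_zip_sym)
    also have "\<dots> = map2 (\<lambda>a b. x [^] a \<otimes> w [^] b) L M"
      unfolding map2M by simp
    finally show ?thesis by (simp add: P_def)
  qed
  have PQ': "P = Q'"
  proof -
    have "inv Q' = P'" by (rule inv_equality[OF P'Q']) (use P'_c Q'_c in auto)
    then have "P' = inv Q'" by simp
    then have "inv P' = Q'" using Q'_c by simp
    then show ?thesis using invP' by simp
  qed
  have QQ': "Q \<otimes> Q' = \<one>"
  proof -
    have "inv Q = P" by (rule inv_equality[OF PQ]) (use P_c Q_c in auto)
    then have "Q \<otimes> P = \<one>" using Q_c by (metis r_inv)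
    then show ?thesis using PQ' by simp
  qed
  have w2: "w [^] (2::int) = x [^] (-2::int)"
  proof -
    have "Q \<otimes> Q' = x [^] (1 - S) \<otimes> (w [^] (1 + S) \<otimes> w [^] (1 - S)) \<otimes> x [^] (1 + S)"
      unfolding Q_def Q'_def using x w_c by (simp add: m_assoc)
    also have "w [^] (1 + S) \<otimes> w [^] (1 - S) = w [^] (2::int)"
      using int_pow_mult[OF w_c, of "1 + S" "1 - S"] by simp
    finally have "x [^] (1 - S) \<otimes> w [^] (2::int) \<otimes> x [^] (1 + S) = \<one>" using QQ' by simp
    then have "w [^] (2::int) = inv (x [^] (1 - S)) \<otimes> inv (x [^] (1 + S))"
      using x w_c by (intro solve_mid) auto
    also have "\<dots> = x [^] (- (1 - S)) \<otimes> x [^] (- (1 + S))" by (simp only: int_pow_neg[OF x])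
    also have "\<dots> = x [^] (- (1 - S) + - (1 + S))" by (simp only: int_pow_mult[OF x])
    also have "- (1 - S) + - (1 + S) = (-2::int)" by simp
    finally show ?thesis .
  qed
  have weven: "w [^] a = x [^] (-a)" if "even a" for a :: int
  proof -
    obtain c where c: "a = 2 * c" using \<open>even a\<close> by (auto elim: evenE)
    have "w [^] a = (w [^] (2::int)) [^] c" using w_c by (simp add: int_pow_pow c)
    also have "\<dots> = (x [^] (-2::int)) [^] c" by (simp only: w2)
    also have "\<dots> = x [^] (-a)" using x by (simp add: int_pow_pow c)
    finally show ?thesis .
  qed
  have P2S: "P = x [^] (2 * S)"
  proof -
    have meq: "map2 (\<lambda>a b. x [^] a \<otimes> w [^] b) L M = map (\<lambda>(a,b). x [^] (a - b)) (zip L M)"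
    proof (rule map_cong)
      fix p assume p: "p \<in> set (zip L M)"
      obtain a b where ab: "p = (a, b)" by (cases p)
      have "b \<in> set M" using p ab by (auto dest: set_zip_rightD)
      then have "w [^] b = x [^] (-b)" using evM weven by blast
      then show "(\<lambda>(a,b). x [^] a \<otimes> w [^] b) p = (\<lambda>(a,b). x [^] (a - b)) p"
        using x by (simp add: ab int_pow_mult[symmetric])
    qed simp
    have "P = x [^] (sum_list L - sum_list M)"
      unfolding P_def meq by (rule pows_prod[OF x lenM])
    then show ?thesis by (simp add: sumM S_def)
  qed
  have w1: "w = inv x"
  proof -
    have "w [^] (- S) = x [^] S" using weven[of "- S"] evS by simp
    have "Q' = w \<otimes> (w [^] (- S) \<otimes> x [^] (1 + S))"
      unfolding Q'_def using int_pow_mult[OF w_c, of 1 "- S"] w_c x by (simp add: m_assoc)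
    also have "\<dots> = w \<otimes> x [^] (2 * S + 1)"
      using \<open>w [^] (- S) = x [^] S\<close> int_pow_mult[OF x, of S "1 + S"] by (simp add: algebra_simps)
    finally have "x [^] (2 * S) = w \<otimes> x [^] (2 * S + 1)" using PQ' P2S by simp
    then have "w = x [^] (2 * S) \<otimes> inv (x [^] (2 * S + 1))"
      using x w_c by (simp add: inv_solve_right)
    also have "\<dots> = x [^] (2 * S - (2 * S + 1))" by (simp only: int_pow_diff[OF x])
    also have "\<dots> = inv x" using x by (simp add: int_pow_neg[of x 1, simplified])
    finally show ?thesis .
  qed
  show ?thesis using x y w1 by (simp add: w_def[symmetric] m_assoc)
qed

end



lemma pc_inv: "inv\<^bsub>presented_group R\<^esub> (pclass R u) = pclass R (winv u)"
proof -
  interpret G: group "presented_group R" by (rule pg_group)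
  show ?thesis
    by (rule G.inv_equality) (simp_all add: pg_mult pg_one pclass_eq winv_l)
qed

lemma pc_rep: "pclass R (replicate m l) = pclass R [l] [^]\<^bsub>presented_group R\<^esub> m"
proof (induction m)
  case 0 then show ?case by (simp add: pg_one)
next
  case (Suc m)
  interpret G: group "presented_group R" by (rule pg_group)
  have "pclass R (replicate (Suc m) l) = pclass R [l] \<otimes>\<^bsub>presented_group R\<^esub> pclass R (replicate m l)"
    by (simp add: pg_mult)
  also have "\<dots> = pclass R [l] \<otimes>\<^bsub>presented_group R\<^esub> pclass R [l] [^]\<^bsub>presented_group R\<^esub> m"
    by (simp only: Suc)
  also have "\<dots> = pclass R [l] [^]\<^bsub>presented_group R\<^esub> Suc m"
    by (rule G.nat_pow_Suc2[symmetric]) simp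
  finally show ?case .
qed

lemma winv_single: "winv [(False, g)] = [(True, g)]"
  by (simp add: winv_def inv_letter_def)

lemma pc_gpow: "pclass R (gpow g a) = pclass R [(False, g)] [^]\<^bsub>presented_group R\<^esub> a"
proof -
  interpret G: group "presented_group R" by (rule pg_group)
  show ?thesis
  proof (cases "0 \<le> a")
    case True
    then have "gpow g a = replicate (nat a) (False, g)" by (simp add: gpow_def)
    then have "pclass R (gpow g a) = pclass R [(False, g)] [^]\<^bsub>presented_group R\<^esub> nat a"
      by (simp only: pc_rep)
    also have "\<dots> = pclass R [(False, g)] [^]\<^bsub>presented_group R\<^esub> a"
    proof -
      have "\<not> a < 0" using True by simp
      then show ?thesis by (simp only: int_pow_def2[of _ _ a] if_False)
    qed
    finally show ?thesis .
  next
    case False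
    have i: "pclass R [(True, g)] = inv\<^bsub>presented_group R\<^esub> (pclass R [(False, g)])"
      by (simp add: pc_inv winv_single)
    have "gpow g a = replicate (nat (- a)) (True, g)" using False by (simp add: gpow_def)
    then have "pclass R (gpow g a) = pclass R [(True, g)] [^]\<^bsub>presented_group R\<^esub> nat (- a)"
      by (simp only: pc_rep)
    also have "\<dots> = inv\<^bsub>presented_group R\<^esub> (pclass R [(False, g)] [^]\<^bsub>presented_group R\<^esub> nat (- a))"
      by (simp only: i G.nat_pow_inv[OF pg_carrier])
    also have "\<dots> = pclass R [(False, g)] [^]\<^bsub>presented_group R\<^esub> a"
    proof -
      have "a < 0" using False by simp
      then show ?thesis by (simp only: int_pow_def2[of _ _ a] if_True)
    qed
    finally show ?thesis .
  qed
qed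

lemma pc_concat: "pclass R (concat ws) = gprod (presented_group R) (map (pclass R) ws)"
proof (induction ws)
  case Nil then show ?case by (simp add: gprod_def pg_one)
next
  case (Cons w ws)
  have "gprod (presented_group R) (map (pclass R) (w # ws)) =
     pclass R w \<otimes>\<^bsub>presented_group R\<^esub> gprod (presented_group R) (map (pclass R) ws)"
    by (simp add: gprod_def)
  have "pclass R (concat (w # ws)) = pclass R w \<otimes>\<^bsub>presented_group R\<^esub> pclass R (concat ws)"
    by (simp add: pg_mult)
  also have "\<dots> = pclass R w \<otimes>\<^bsub>presented_group R\<^esub> gprod (presented_group R) (map (pclass R) ws)"
    by (simp only: Cons.IH)
  finally show ?case using \<open>gprod (presented_group R) (map (pclass R) (w # ws)) = _\<close> by simp
qed

lemma gy_inv_winv: "gy_inv = winv gy"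
  by (simp add: gy_inv_def gy_def winv_def inv_letter_def)

lemma pc_block: "pclass R (gpow GX a @ gy @ gpow GX b @ gy_inv) =
   pclass R gx [^]\<^bsub>presented_group R\<^esub> a \<otimes>\<^bsub>presented_group R\<^esub> pclass R gy
   \<otimes>\<^bsub>presented_group R\<^esub> pclass R gx [^]\<^bsub>presented_group R\<^esub> b
   \<otimes>\<^bsub>presented_group R\<^esub> inv\<^bsub>presented_group R\<^esub> (pclass R gy)"
  unfolding gx_def pc_gpow[symmetric] pc_inv pg_mult gy_inv_winv by simp

lemma pc_Prel: "pclass R (P_rel L M) = group.relG (presented_group R) (pclass R gx) (pclass R gy) L M"
proof -
  interpret G: group "presented_group R" by (rule pg_group)
  show ?thesis
    unfolding P_rel_def Let_def G.relG_def pc_concat map_map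
    by (simp add: comp_def case_prod_unfold pc_block)
qed

lemma pc_rel: "r \<in> R \<Longrightarrow> pclass R r = \<one>\<^bsub>presented_group R\<^esub>"
proof -
  assume r: "r \<in> R"
  have "word_eq R ([] @ r @ []) ([] @ [])" using r by (rule word_eq.rel)
  then show ?thesis by (simp add: pg_one pclass_eq)
qed

lemma pc_one_word: "pclass R r = \<one>\<^bsub>presented_group R\<^esub> \<Longrightarrow> word_eq R r []"
  by (simp add: pg_one pclass_eq)

lemma word_eq_mono:
  assumes h: "\<forall>r\<in>R1. word_eq R2 r []"
  shows "word_eq R1 u v \<Longrightarrow> word_eq R2 u v"
proof (induction rule: word_eq.induct)
  case (refl w) then show ?case by (rule word_eq.refl)
next
  case (sym u v) show ?case using sym.IH by (rule word_eq.sym)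
next
  case (trans u v w) show ?case using trans.IH by (rule word_eq.trans)
next
  case (cancel u l v) then show ?case by (rule word_eq.cancel)
next
  case (rel r u v)
  have "word_eq R2 (u @ r @ v) (u @ [] @ v)" using h rel by (intro word_eq_ctx[of R2 r "[]" u v]) auto
  then show ?case by simp
qed



lemma word_eq_mem: "r \<in> R \<Longrightarrow> word_eq R r []"
  using word_eq.rel[of r R "[]" "[]"] by simp

theorem theorem3p9:
  fixes n :: nat and ns :: "int list"
  assumes "n \<ge> 2"
    and "\<forall>a\<in>set ns. even a \<and> 1 \<le> a \<and> a \<le> 2 * int n - 2"
  shows "regular n (P_rel ns (map uminus (rev ns)))"
proof -
  define q where "q = gx @ gy @ gx @ gy_inv"
  define r where "r = P_rel ns (map uminus (rev ns))"
  define R1 where "R1 = {rel0 n, r}"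
  define R2 where "R2 = {rel0 n, q}"
  have ev: "\<forall>a\<in>set ns. even a" using assms(2) by auto
  have qform: "pclass R q = pclass R gx \<otimes>\<^bsub>presented_group R\<^esub> pclass R gy
      \<otimes>\<^bsub>presented_group R\<^esub> pclass R gx \<otimes>\<^bsub>presented_group R\<^esub>
      inv\<^bsub>presented_group R\<^esub> (pclass R gy)" for R
  proof -
    interpret G: group "presented_group R" by (rule pg_group)
    show ?thesis
      unfolding q_def gy_inv_winv pc_inv pg_mult by simp
  qed
  have A: "word_eq R2 r []"
  proof -
    interpret G: group "presented_group R2" by (rule pg_group)
    have "pclass R2 q = \<one>\<^bsub>presented_group R2\<^esub>" by (rule pc_rel) (simp add: R2_def)
    then have "pclass R2 gx \<otimes>\<^bsub>presented_group R2\<^esub> pclass R2 gy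
      \<otimes>\<^bsub>presented_group R2\<^esub> pclass R2 gx \<otimes>\<^bsub>presented_group R2\<^esub>
      inv\<^bsub>presented_group R2\<^esub> (pclass R2 gy) = \<one>\<^bsub>presented_group R2\<^esub>"
      by (simp only: qform)
    then have "G.relG (pclass R2 gx) (pclass R2 gy) ns (map uminus (rev ns)) = \<one>\<^bsub>presented_group R2\<^esub>"
      by (intro G.dir1[of "pclass R2 gx" "pclass R2 gy"]) auto
    then have "pclass R2 r = \<one>\<^bsub>presented_group R2\<^esub>" by (simp add: r_def pc_Prel)
    then show ?thesis by (rule pc_one_word)
  qed
  have B: "word_eq R1 q []"
  proof -
    interpret G: group "presented_group R1" by (rule pg_group)
    let ?X = "pclass R1 gx" and ?Y = "pclass R1 gy"
    have "pclass R1 (rel0 n) = \<one>\<^bsub>presented_group R1\<^esub>" by (rule pc_rel) (simp add: R1_def)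
    moreover have "pclass R1 (rel0 n) = ?X [^]\<^bsub>presented_group R1\<^esub> (int n)
        \<otimes>\<^bsub>presented_group R1\<^esub> ?Y [^]\<^bsub>presented_group R1\<^esub> (-2::int)"
      unfolding rel0_def pg_mult[symmetric] pc_gpow gx_def gy_def by simp
    ultimately have e: "?X [^]\<^bsub>presented_group R1\<^esub> (int n)
        \<otimes>\<^bsub>presented_group R1\<^esub> ?Y [^]\<^bsub>presented_group R1\<^esub> (-2::int) = \<one>\<^bsub>presented_group R1\<^esub>"
      by simp
    have "inv\<^bsub>presented_group R1\<^esub> (?Y [^]\<^bsub>presented_group R1\<^esub> (-2::int)) = ?X [^]\<^bsub>presented_group R1\<^esub> (int n)"
      by (rule G.inv_equality[OF e]) auto
    moreover have "?Y [^]\<^bsub>presented_group R1\<^esub> (-2::int) = inv\<^bsub>presented_group R1\<^esub> (?Y [^]\<^bsub>presented_group R1\<^esub> (2::int))"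
      using G.int_pow_neg[of ?Y 2] by simp
    moreover have "?Y [^]\<^bsub>presented_group R1\<^esub> (2::int) = ?Y [^]\<^bsub>presented_group R1\<^esub> (2::nat)"
      using int_pow_int[of "presented_group R1" ?Y 2] by simp
    ultimately have xn: "?X [^]\<^bsub>presented_group R1\<^esub> n = ?Y [^]\<^bsub>presented_group R1\<^esub> (2::nat)"
      by (simp add: int_pow_int)
    have "pclass R1 r = \<one>\<^bsub>presented_group R1\<^esub>" by (rule pc_rel) (simp add: R1_def)
    then have rel: "G.relG ?X ?Y ns (map uminus (rev ns)) = \<one>\<^bsub>presented_group R1\<^esub>"
      by (simp add: r_def pc_Prel)
    have "?X \<otimes>\<^bsub>presented_group R1\<^esub> ?Y \<otimes>\<^bsub>presented_group R1\<^esub> ?X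
       \<otimes>\<^bsub>presented_group R1\<^esub> inv\<^bsub>presented_group R1\<^esub> ?Y = \<one>\<^bsub>presented_group R1\<^esub>"
      by (rule G.dir2[OF _ _ xn rel ev]) auto
    then have "pclass R1 q = \<one>\<^bsub>presented_group R1\<^esub>" by (simp only: qform)
    then show ?thesis by (rule pc_one_word)
  qed
  have E: "word_eq R1 = word_eq R2"
  proof (intro ext iffI)
    fix u v
    assume "word_eq R1 u v"
    moreover have "\<forall>s\<in>R1. word_eq R2 s []"
      using A by (auto simp: R1_def R2_def intro: word_eq_mem)
    ultimately show "word_eq R2 u v" using word_eq_mono by blast
  next
    fix u v
    assume "word_eq R2 u v"
    moreover have "\<forall>s\<in>R2. word_eq R1 s []"
      using B by (auto simp: R1_def R2_def intro: word_eq_mem)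
    ultimately show "word_eq R1 u v" using word_eq_mono by blast
  qed
  have pc: "pclass R1 = pclass R2" by (rule ext) (simp add: pclass_def E)
  have pg: "presented_group R1 = presented_group R2" by (simp add: presented_group_def E pc)
  show ?thesis
    unfolding regular_def Q_def
    using pg pc id_iso[of "presented_group R2"]
    by (intro exI[of _ id]) (simp add: R1_def R2_def r_def q_def)
qed


end
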